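(* For every integer $k\ge 4$, the order $TW_k$ has questionable-width at least $3k-8$.
   Context: For an integer $k\ge3$, $TW_k$ is the order on the elements $t_0,\dots,t_{k-1}$ together with one element $w_{a,b}$ for each pair of integers $0\le a$, $b\le k-1$ with $b\ge a+2$, whose order relation is: $t_j<t_l$ iff $j<l$; $t_j<w_{a,b}$ iff $j\le a$; $w_{a,b}<t_j$ iff $j\ge b$; $w_{a,b}<w_{c,d}$ iff $b\le c$; all other pairs are incomparable. For an ordinal $j$, $\mathcal O_j=(O_k)_{k<j}$ is a sequence of orders; a word of length $\ell\le j$ is $(x_k)_{k<\ell}$ with $x_k\in\mathrm{Dom}(O_k)$. The question of words $X,Y$ is $(k,x_k,y_k)$ for the least $k<\min(\mathrm{len}X,\mathrm{len}Y)$ with $x_k\ne y_k$, if it exists. For $i<j$, $\mathrm{Next}(i,j,\mathcal O_j)$ is the partial order on words of length $\ell$, $i\le\ell<j$, with $X<Y$ iff their question exists and $x_k<y_k$ in $O_k$; otherwise incomparable. A questionable representation of an order $O$ is an injective $f$ into some $\mathrm{Next}(i,j,\mathcal O_j)$ with $f(x)<f(y)\iff x<y$; its width is the supremum of the cardinalities of the $\mathrm{Dom}(O_k)$. The questionable-width of $O$ is the minimum width of a questionable representation of $O$. *)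

theory Defs
  imports Main "HOL-Library.Extended_Nat"
begin

type_synonym 'a ord = "'a set \<times> ('a \<Rightarrow> 'a \<Rightarrow> bool)"

definition is_order :: "'a ord \<Rightarrow> bool" where
  "is_order Q \<longleftrightarrow>
     (\<forall>x\<in>fst Q. \<not> snd Q x x) \<and>
     (\<forall>x\<in>fst Q. \<forall>y\<in>fst Q. \<forall>z\<in>fst Q. snd Q x y \<longrightarrow> snd Q y z \<longrightarrow> snd Q x z)"

datatype tw_elem = T nat | W nat nat

definition tw_dom :: "nat \<Rightarrow> tw_elem set" where
  "tw_dom k = {T j | j. j < k} \<union> {W a b | a b. b \<le> k - 1 \<and> a + 2 \<le> b}"

fun tw_less :: "tw_elem \<Rightarrow> tw_elem \<Rightarrow> bool" where
  "tw_less (T j) (T l) \<longleftrightarrow> j < l"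
| "tw_less (T j) (W a b) \<longleftrightarrow> j \<le> a"
| "tw_less (W a b) (T j) \<longleftrightarrow> b \<le> j"
| "tw_less (W a b) (W c d) \<longleftrightarrow> b \<le> c"

definition TW :: "nat \<Rightarrow> tw_elem ord" where
  "TW k = (tw_dom k, tw_less)"

text \<open>The ordinal j is represented by a well-ordered index type 'i (the set of
ordinals below j is the whole type). A word of length l is a pair (l, x) where x k is in the
domain of Os k for k < l and x k = undefined for k \<ge> l (normal form).\<close>

definition word :: "('i::wellorder \<Rightarrow> 'a ord) \<Rightarrow> 'i \<times> ('i \<Rightarrow> 'a) \<Rightarrow> bool" where
  "word Os X \<longleftrightarrow> (\<forall>k < fst X. snd X k \<in> fst (Os k)) \<and> (\<forall>k. fst X \<le> k \<longrightarrow> snd X k = undefined)"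

definition next_dom :: "'i::wellorder \<Rightarrow> ('i \<Rightarrow> 'a ord) \<Rightarrow> ('i \<times> ('i \<Rightarrow> 'a)) set" where
  "next_dom i Os = {X. word Os X \<and> i \<le> fst X}"

definition question_exists :: "'i::wellorder \<times> ('i \<Rightarrow> 'a) \<Rightarrow> 'i \<times> ('i \<Rightarrow> 'a) \<Rightarrow> bool" where
  "question_exists X Y \<longleftrightarrow> (\<exists>k. k < min (fst X) (fst Y) \<and> snd X k \<noteq> snd Y k)"

definition question_idx :: "'i::wellorder \<times> ('i \<Rightarrow> 'a) \<Rightarrow> 'i \<times> ('i \<Rightarrow> 'a) \<Rightarrow> 'i" where
  "question_idx X Y = (LEAST k. k < min (fst X) (fst Y) \<and> snd X k \<noteq> snd Y k)"

definition next_less :: "('i::wellorder \<Rightarrow> 'a ord) \<Rightarrow> 'i \<times> ('i \<Rightarrow> 'a) \<Rightarrow> 'i \<times> ('i \<Rightarrow> 'a) \<Rightarrow> bool" where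
  "next_less Os X Y \<longleftrightarrow> question_exists X Y \<and>
     snd (Os (question_idx X Y)) (snd X (question_idx X Y)) (snd Y (question_idx X Y))"

definition questionable_rep ::
  "'b ord \<Rightarrow> 'i::wellorder \<Rightarrow> ('i \<Rightarrow> 'a ord) \<Rightarrow> ('b \<Rightarrow> 'i \<times> ('i \<Rightarrow> 'a)) \<Rightarrow> bool" where
  "questionable_rep P i Os f \<longleftrightarrow>
     (\<forall>k. is_order (Os k)) \<and>
     f ` fst P \<subseteq> next_dom i Os \<and>
     inj_on f (fst P) \<and>
     (\<forall>x\<in>fst P. \<forall>y\<in>fst P. next_less Os (f x) (f y) \<longleftrightarrow> snd P x y)"

text \<open>Width: supremum of the cardinalities of the domains, with every infinite
cardinality collapsed to \<infinity> (enough to compare with finite bounds).\<close>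
definition card_e :: "'a set \<Rightarrow> enat" where
  "card_e A = (if finite A then enat (card A) else \<infinity>)"

definition qwidth :: "('i \<Rightarrow> 'a ord) \<Rightarrow> enat" where
  "qwidth Os = (SUP k. card_e (fst (Os k)))"

end

theory Submission
  imports Defs
begin


lemma question_props:
  assumes "question_exists X Y"
  shows "question_idx X Y < fst X" "question_idx X Y < fst Y"
    "snd X (question_idx X Y) \<noteq> snd Y (question_idx X Y)"
    "\<And>m. m < question_idx X Y \<Longrightarrow> snd X m = snd Y m"
proof -
  let ?P = "\<lambda>k. k < min (fst X) (fst Y) \<and> snd X k \<noteq> snd Y k"
  have ex: "\<exists>k. ?P k" using assms unfolding question_exists_def .
  have P: "?P (question_idx X Y)" unfolding question_idx_def by (rule LeastI_ex[OF ex])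
  then show "question_idx X Y < fst X" "question_idx X Y < fst Y"
    "snd X (question_idx X Y) \<noteq> snd Y (question_idx X Y)" by auto
  fix m assume m: "m < question_idx X Y"
  then have "\<not> ?P m" unfolding question_idx_def by (rule not_less_Least)
  moreover have "m < min (fst X) (fst Y)" using m P by auto
  ultimately show "snd X m = snd Y m" by auto
qed

lemma question_at:
  fixes X Y :: "'i::wellorder \<times> ('i \<Rightarrow> 'a)"
  assumes "r < fst X" "r < fst Y" "\<And>m. m < r \<Longrightarrow> snd X m = snd Y m" "snd X r \<noteq> snd Y r"
  shows "question_exists X Y" "question_idx X Y = r"
proof -
  show "question_exists X Y" unfolding question_exists_def using assms by auto
  show "question_idx X Y = r" unfolding question_idx_def
  proof (rule Least_equality)
    show "r < min (fst X) (fst Y) \<and> snd X r \<noteq> snd Y r" using assms by auto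
  next
    fix y assume "y < min (fst X) (fst Y) \<and> snd X y \<noteq> snd Y y"
    then show "r \<le> y" using assms(3) by (meson not_le)
  qed
qed

lemma next_less_at:
  fixes X Y :: "'i::wellorder \<times> ('i \<Rightarrow> 'a)"
  assumes "r < fst X" "r < fst Y" "\<And>m. m < r \<Longrightarrow> snd X m = snd Y m" "snd X r \<noteq> snd Y r"
  shows "next_less Os X Y \<longleftrightarrow> snd (Os r) (snd X r) (snd Y r)"
  using question_at[OF assms] unfolding next_less_def by simp

lemma qsym:
  assumes "question_exists X Y"
  shows "question_exists Y X" "question_idx Y X = question_idx X Y"
proof -
  note p = question_props[OF assms]
  have "question_exists Y X \<and> question_idx Y X = question_idx X Y"
    using question_at[of "question_idx X Y" Y X] p by (metis)
  then show "question_exists Y X" "question_idx Y X = question_idx X Y" by auto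
qed



locale qr_setup =
  fixes k :: nat and i :: "'i::wellorder" and Os :: "'i \<Rightarrow> 'a ord"
    and f :: "tw_elem \<Rightarrow> 'i \<times> ('i \<Rightarrow> 'a)"
  assumes k4: "k \<ge> 4" and qr: "questionable_rep (TW k) i Os f"
begin

lemma rel: "x \<in> tw_dom k \<Longrightarrow> y \<in> tw_dom k \<Longrightarrow> next_less Os (f x) (f y) \<longleftrightarrow> tw_less x y"
  using qr unfolding questionable_rep_def TW_def by auto

lemma ord: "is_order (Os m)"
  using qr unfolding questionable_rep_def by auto

lemma letter_dom: "x \<in> tw_dom k \<Longrightarrow> m < fst (f x) \<Longrightarrow> snd (f x) m \<in> fst (Os m)"
  using qr unfolding questionable_rep_def TW_def next_dom_def word_def by auto

lemma T_dom: "j < k \<Longrightarrow> T j \<in> tw_dom k" by (auto simp: tw_dom_def)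
lemma W_dom: "b \<le> k-1 \<Longrightarrow> a+2 \<le> b \<Longrightarrow> W a b \<in> tw_dom k" by (auto simp: tw_dom_def)

definition Qset where
  "Qset = (\<lambda>(a,b). question_idx (f (T a)) (f (T b))) ` {(a,b). 1 \<le> a \<and> a < b \<and> b \<le> k-2}"

definition q where "q = Min Qset"

lemma Qfin: "finite Qset"
proof -
  have "{(a,b). 1 \<le> a \<and> a < b \<and> b \<le> k-2} \<subseteq> {..k} \<times> {..k}" by auto
  then have "finite {(a,b). 1 \<le> a \<and> a < b \<and> b \<le> k-2}" by (rule finite_subset) auto
  then show ?thesis unfolding Qset_def by auto
qed

lemma Qne: "Qset \<noteq> {}"
proof -
  have "(1,2) \<in> {(a,b). 1 \<le> a \<and> a < b \<and> b \<le> k-2}" using k4 by auto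
  then show ?thesis unfolding Qset_def by blast
qed

lemma chain_nl: "1 \<le> a \<Longrightarrow> a < b \<Longrightarrow> b \<le> k-2 \<Longrightarrow> next_less Os (f (T a)) (f (T b))"
  using rel[of "T a" "T b"] T_dom k4 by auto

lemma chain_qe: "1 \<le> a \<Longrightarrow> a < b \<Longrightarrow> b \<le> k-2 \<Longrightarrow> question_exists (f (T a)) (f (T b))"
  using chain_nl unfolding next_less_def by auto

lemma q_le: "1 \<le> a \<Longrightarrow> a < b \<Longrightarrow> b \<le> k-2 \<Longrightarrow> q \<le> question_idx (f (T a)) (f (T b))"
  unfolding q_def using Qfin by (intro Min_le) (auto simp: Qset_def)

lemma q_in: obtains a0 b0 where "1 \<le> a0" "a0 < b0" "b0 \<le> k-2" "q = question_idx (f (T a0)) (f (T b0))"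
proof -
  have "q \<in> Qset" unfolding q_def using Qfin Qne by (rule Min_in)
  then show ?thesis using that unfolding Qset_def by auto
qed

definition good where
  "good e \<longleftrightarrow> q < fst (f e) \<and> (\<forall>m<q. snd (f e) m = snd (f (T 1)) m)"

definition letter where "letter e = snd (f e) q"

abbreviation lt where "lt x y \<equiv> snd (Os q) x y"

lemma chain_good: "1 \<le> a \<Longrightarrow> a \<le> k-2 \<Longrightarrow> good (T a)"
proof -
  assume a: "1 \<le> a" "a \<le> k-2"
  show ?thesis
  proof (cases "a = 1")
    case True
    have qe: "question_exists (f (T 1)) (f (T 2))" using chain_qe[of 1 2] k4 by auto
    have "q \<le> question_idx (f (T 1)) (f (T 2))" using q_le[of 1 2] k4 by auto
    then show ?thesis using question_props(1)[OF qe] True unfolding good_def by auto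
  next
    case False
    then have a1: "1 < a" using a by auto
    have qe: "question_exists (f (T 1)) (f (T a))" using chain_qe[of 1 a] a a1 by auto
    have ql: "q \<le> question_idx (f (T 1)) (f (T a))" using q_le[of 1 a] a a1 by auto
    have "q < fst (f (T a))" using question_props(2)[OF qe] ql by (rule le_less_trans[rotated])
    moreover have "\<forall>m<q. snd (f (T a)) m = snd (f (T 1)) m"
    proof (intro allI impI)
      fix m assume "m < q"
      then have "m < question_idx (f (T 1)) (f (T a))" using ql by (rule less_le_trans)
      then show "snd (f (T a)) m = snd (f (T 1)) m" using question_props(4)[OF qe] by metis
    qed
    ultimately show ?thesis unfolding good_def by auto
  qed
qed

lemma good_letter_dom: "e \<in> tw_dom k \<Longrightarrow> good e \<Longrightarrow> letter e \<in> fst (Os q)"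
  unfolding good_def letter_def using letter_dom by auto

lemma letters_rel:
  assumes "good x" "good y" "letter x \<noteq> letter y"
  shows "next_less Os (f x) (f y) \<longleftrightarrow> lt (letter x) (letter y)"
  unfolding letter_def
  by (rule next_less_at) (use assms in \<open>auto simp: good_def letter_def\<close>)

lemma rel_letters:
  assumes "x \<in> tw_dom k" "y \<in> tw_dom k" "good x" "good y" "letter x \<noteq> letter y"
  shows "tw_less x y \<longleftrightarrow> lt (letter x) (letter y)"
  using letters_rel[OF assms(3-5)] rel[OF assms(1,2)] by simp

lemma irr: "z \<in> fst (Os q) \<Longrightarrow> \<not> lt z z"
  using ord[of q] unfolding is_order_def by auto

lemma trs: "x \<in> fst (Os q) \<Longrightarrow> y \<in> fst (Os q) \<Longrightarrow> z \<in> fst (Os q) \<Longrightarrow> lt x y \<Longrightarrow> lt y z \<Longrightarrow> lt x z"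
  using ord[of q] unfolding is_order_def by blast

end


context qr_setup begin

lemma good_w:
  assumes e: "e \<in> tw_dom k" and c: "1 \<le> c" "c \<le> k-2" and comp: "tw_less e (T c) \<or> tw_less (T c) e"
    and d: "1 \<le> d" "d \<le> k-2" and inc: "\<not> tw_less e (T d)" "\<not> tw_less (T d) e"
  shows "good e"
proof -
  have Tc: "T c \<in> tw_dom k" "good (T c)" using c T_dom chain_good k4 by auto
  have Td: "T d \<in> tw_dom k" "good (T d)" using d T_dom chain_good k4 by auto
  have qe: "question_exists (f e) (f (T c))"
    using comp rel[OF e Tc(1)] rel[OF Tc(1) e] qsym(1) unfolding next_less_def by blast
  define r where "r = question_idx (f e) (f (T c))"
  note p = question_props[OF qe, folded r_def]
  show ?thesis
  proof (cases "q \<le> r")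
    case True
    have "q < fst (f e)" using p(1) True by simp
    moreover have "\<forall>m<q. snd (f e) m = snd (f (T 1)) m"
    proof (intro allI impI)
      fix m assume "m < q"
      then have "m < r" using True by simp
      then have "snd (f e) m = snd (f (T c)) m" using p(4) by simp
      also have "\<dots> = snd (f (T 1)) m" using Tc(2) \<open>m < q\<close> unfolding good_def by simp
      finally show "snd (f e) m = snd (f (T 1)) m" .
    qed
    ultimately show ?thesis unfolding good_def by simp
  next
    case False
    then have rq: "r < q" by simp
    have prec: "\<And>m. m \<le> r \<Longrightarrow> snd (f (T c)) m = snd (f (T 1)) m"
      using Tc(2) rq unfolding good_def by auto
    have pred: "\<And>m. m \<le> r \<Longrightarrow> snd (f (T d)) m = snd (f (T 1)) m"
      using Td(2) rq unfolding good_def by auto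
    have lenc: "r < fst (f (T c))" using Tc(2) rq unfolding good_def by auto
    have lend: "r < fst (f (T d))" using Td(2) rq unfolding good_def by auto
    have agc: "\<And>m. m < r \<Longrightarrow> snd (f e) m = snd (f (T c)) m" using p(4) by simp
    have agd: "\<And>m. m < r \<Longrightarrow> snd (f e) m = snd (f (T d)) m" using p(4) prec pred by simp
    have cd: "snd (f (T d)) r = snd (f (T c)) r" using prec pred by simp
    have diffc: "snd (f e) r \<noteq> snd (f (T c)) r" using p(3) .
    have diffd: "snd (f e) r \<noteq> snd (f (T d)) r" using p(3) cd by simp
    have 1: "next_less Os (f e) (f (T d)) \<longleftrightarrow> next_less Os (f e) (f (T c))"
      using next_less_at[of r "f e" "f (T d)" Os] next_less_at[of r "f e" "f (T c)" Os]
        p(1) lend lenc agc agd diffc diffd cd by simp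
    have 2: "next_less Os (f (T d)) (f e) \<longleftrightarrow> next_less Os (f (T c)) (f e)"
      using next_less_at[of r "f (T d)" "f e" Os] next_less_at[of r "f (T c)" "f e" Os]
        p(1) lend lenc agc agd diffc diffd cd by (simp add: eq_commute)
    show ?thesis using 1 2 rel[OF e Tc(1)] rel[OF Tc(1) e] rel[OF e Td(1)] rel[OF Td(1) e] comp inc
      by blast
  qed
qed

abbreviation x where "x c \<equiv> letter (T c)"

lemma chain_dom: "1 \<le> a \<Longrightarrow> a \<le> k-2 \<Longrightarrow> T a \<in> tw_dom k \<and> good (T a) \<and> x a \<in> fst (Os q)"
  using T_dom[of a] chain_good[of a] good_letter_dom[of "T a"] k4 by auto

lemma chain_mono: "1 \<le> a \<Longrightarrow> a < b \<Longrightarrow> b \<le> k-2 \<Longrightarrow> x a = x b \<or> lt (x a) (x b)"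
  using rel_letters[of "T a" "T b"] chain_dom[of a] chain_dom[of b] by auto

lemma fwd:
  assumes m: "1 \<le> m" "m+2 \<le> k-2" and E: "x m = x (m+1)"
  shows "x (m+1) = x (m+2)"
proof (rule ccontr)
  assume ne: "x (m+1) \<noteq> x (m+2)"
  let ?w = "W m (m+3)"
  have wd: "?w \<in> tw_dom k" using m by (intro W_dom) auto
  have gw: "good ?w" using good_w[OF wd, of m "m+1"] m by auto
  have lt12: "lt (x (m+1)) (x (m+2))" using chain_mono[of "m+1" "m+2"] ne m by auto
  note cm = chain_dom[of m] chain_dom[of "m+1"] chain_dom[of "m+2"]
  show False
  proof (cases "letter ?w = x m")
    case True
    then have "letter ?w \<noteq> x (m+2)" using E ne by simp
    then have "tw_less ?w (T (m+2)) \<longleftrightarrow> lt (letter ?w) (x (m+2))"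
    proof -
      have "T (m+2) \<in> tw_dom k \<and> good (T (m+2))" using chain_dom[of "m+2"] m by simp
      then show ?thesis using rel_letters[OF wd _ gw, of "T (m+2)"] \<open>letter ?w \<noteq> x (m+2)\<close> by blast
    qed
    then show False using True E lt12 by simp
  next
    case False
    have a: "lt (x m) (letter ?w)" using rel_letters[OF _ wd _ gw, of "T m"] False cm m by auto
    have "\<not> lt (x (m+1)) (letter ?w)" using rel_letters[OF _ wd _ gw, of "T (m+1)"] False E cm m by auto
    then show False using a E by simp
  qed
qed

lemma bwd:
  assumes m: "2 \<le> m" "m+1 \<le> k-2" and E: "x m = x (m+1)"
  shows "x (m-1) = x m"
proof (rule ccontr)
  assume ne: "x (m-1) \<noteq> x m"
  let ?w = "W (m-2) (m+1)"
  have wd: "?w \<in> tw_dom k" using m by (intro W_dom) auto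
  have gw: "good ?w" using good_w[OF wd, of "m+1" m] m by auto
  have lt01: "lt (x (m-1)) (x m)" using chain_mono[of "m-1" m] ne m by auto
  note cm = chain_dom[of m] chain_dom[of "m+1"] chain_dom[of "m-1"]
  show False
  proof (cases "letter ?w = x m")
    case True
    then have "letter ?w \<noteq> x (m-1)" using ne by simp
    then have "tw_less (T (m-1)) ?w \<longleftrightarrow> lt (x (m-1)) (letter ?w)"
      using rel_letters[OF _ wd _ gw, of "T (m-1)"] cm m by auto
    then show False using True lt01 m by simp
  next
    case False
    have a: "lt (letter ?w) (x (m+1))" using rel_letters[OF wd _ gw, of "T (m+1)"] False E cm m by auto
    have "\<not> lt (letter ?w) (x m)" using rel_letters[OF wd _ gw, of "T m"] False cm m by auto
    then show False using a E by simp
  qed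
qed

end


context qr_setup begin

lemma adj_neq:
  assumes m: "1 \<le> m" "m+1 \<le> k-2"
  shows "x m \<noteq> x (m+1)"
proof
  assume E0: "x m = x (m+1)"
  have up: "m + d + 1 \<le> k-2 \<Longrightarrow> x (m+d) = x (m+d+1)" for d
  proof (induction d)
    case 0 then show ?case using E0 by simp
  next
    case (Suc d)
    then have "x (m+d) = x (m+d+1)" by simp
    then have "x (m+d+1) = x (m+d+2)" using fwd[of "m+d"] Suc.prems m by simp
    then show ?case by simp
  qed
  have down: "d < m \<Longrightarrow> x (m-d) = x (m-d+1)" for d
  proof (induction d)
    case 0 then show ?case using E0 by simp
  next
    case (Suc d)
    then have "x (m-d) = x (m-d+1)" by simp
    then have "x (m-d-1) = x (m-d)" using bwd[of "m-d"] Suc.prems m by simp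
    moreover have "m - d - 1 = m - Suc d" "m - d = m - Suc d + 1" using Suc.prems by auto
    ultimately show ?case by metis
  qed
  have all: "1 \<le> j \<Longrightarrow> j+1 \<le> k-2 \<Longrightarrow> x j = x (j+1)" for j
  proof (cases "m \<le> j")
    case True
    assume "j+1 \<le> k-2"
    then show ?thesis using up[of "j-m"] True by simp
  next
    case False
    assume "1 \<le> j"
    then show ?thesis using down[of "m-j"] False by simp
  qed
  have const: "1 \<le> j \<Longrightarrow> j \<le> k-2 \<Longrightarrow> x j = x 1" for j
  proof (induction j)
    case 0 then show ?case by simp
  next
    case (Suc j)
    show ?case
    proof (cases "j = 0")
      case True then show ?thesis by simp
    next
      case False
      then have "x j = x 1" using Suc by simp
      moreover have "x j = x (j+1)" using all[of j] Suc.prems False by simp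
      ultimately show ?thesis by simp
    qed
  qed
  obtain a0 b0 where ab: "1 \<le> a0" "a0 < b0" "b0 \<le> k-2" "q = question_idx (f (T a0)) (f (T b0))"
    by (rule q_in)
  have "x a0 \<noteq> x b0"
    using question_props(3)[OF chain_qe[OF ab(1-3)]] ab(4) unfolding letter_def by simp
  moreover have "x a0 = x 1" using const[of a0] ab by linarith
  moreover have "x b0 = x 1" using const[of b0] ab by linarith
  ultimately show False by simp
qed

lemma chain_strict:
  assumes "1 \<le> a" "a < b" "b \<le> k-2"
  shows "lt (x a) (x b)"
proof -
  have "a + d + 1 \<le> k-2 \<Longrightarrow> lt (x a) (x (a+d+1))" for d
  proof (induction d)
    case 0 then show ?case using chain_mono[of a "a+1"] adj_neq[of a] assms by simp
  next
    case (Suc d)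
    then have 1: "lt (x a) (x (a+d+1))" by simp
    have 2: "lt (x (a+d+1)) (x (a+d+2))" using chain_mono[of "a+d+1" "a+d+2"] adj_neq[of "a+d+1"] Suc.prems assms
      by simp
    have "lt (x a) (x (a+d+2))"
      by (rule trs[OF _ _ _ 1 2]) (use chain_dom[of a] chain_dom[of "a+d+1"] chain_dom[of "a+d+2"] Suc.prems assms in auto)
    then show ?case by simp
  qed
  from this[of "b-a-1"] show ?thesis using assms by simp
qed

lemma chain_inj:
  assumes "1 \<le> a" "a \<le> k-2" "1 \<le> b" "b \<le> k-2" "a \<noteq> b"
  shows "x a \<noteq> x b"
proof
  assume eq: "x a = x b"
  show False
  proof (cases "a < b")
    case True then show False using chain_strict[of a b] irr[of "x a"] chain_dom[of a] assms eq by auto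
  next
    case False then have "b < a" using assms by simp
    then show False using chain_strict[of b a] irr[of "x b"] chain_dom[of b] assms eq by auto
  qed
qed

lemma good_S1: assumes "1 \<le> j" "j \<le> k-2" shows "W (j-1) (j+1) \<in> tw_dom k \<and> good (W (j-1) (j+1))"
proof -
  have wd: "W (j-1) (j+1) \<in> tw_dom k" using assms by (intro W_dom) auto
  show ?thesis
  proof (cases "j+1 \<le> k-2")
    case True then show ?thesis using good_w[OF wd, of "j+1" j] wd assms by auto
  next
    case False then show ?thesis using good_w[OF wd, of "j-1" j] wd assms k4 by auto
  qed
qed

lemma good_S2: assumes "1 \<le> j" "j+2 \<le> k-2" shows "W (j-1) (j+2) \<in> tw_dom k \<and> good (W (j-1) (j+2))"
proof -
  have wd: "W (j-1) (j+2) \<in> tw_dom k" using assms by (intro W_dom) auto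
  show ?thesis using good_w[OF wd, of "j+2" j] wd assms by auto
qed

end


context qr_setup begin

lemma singleA:
  assumes j: "1 \<le> j" "j \<le> k-2" and c: "1 \<le> c" "c \<le> k-2"
  shows "letter (W (j-1) (j+1)) \<noteq> x c"
proof
  let ?w = "W (j-1) (j+1)"
  assume eq: "letter ?w = x c"
  have gw: "?w \<in> tw_dom k" "good ?w" using good_S1[OF j] by auto
  note cj = chain_dom[OF j] and cc = chain_dom[OF c]
  show False
  proof (cases "c = j")
    case False
    then have ne: "letter ?w \<noteq> x j" using chain_inj[of c j] j c eq by auto
    have 1: "\<not> lt (x c) (x j)" using rel_letters[OF gw(1) _ gw(2), of "T j"] ne eq cj j by auto
    have 2: "\<not> lt (x j) (x c)" using rel_letters[OF _ gw(1) _ gw(2), of "T j"] ne eq cj j by auto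
    show False
    proof (cases "c < j")
      case True then show False using chain_strict[of c j] 1 j c by simp
    next
      case False then have "j < c" using \<open>c \<noteq> j\<close> by simp
      then show False using chain_strict[of j c] 2 j c by simp
    qed
  next
    case True
    show False
    proof (cases "j+1 \<le> k-2")
      case True
      let ?v = "W j (j+2)"
      have gv: "?v \<in> tw_dom k" "good ?v" using good_S1[of "j+1"] True j by auto
      have c1: "T (j+1) \<in> tw_dom k \<and> good (T (j+1))" using chain_dom[of "j+1"] True by simp
      have s: "lt (x j) (x (j+1))" using chain_strict[of j "j+1"] True j by simp
      show False
      proof (cases "letter ?v = x j")
        case True
        then have "letter ?v \<noteq> x (j+1)" using chain_inj[of j "j+1"] j \<open>j+1 \<le> k-2\<close> by auto
        then have "tw_less ?v (T (j+1)) \<longleftrightarrow> lt (letter ?v) (x (j+1))"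
          using rel_letters[OF gv(1) _ gv(2), of "T (j+1)"] c1 by blast
        then show False using s True by simp
      next
        case False
        have a: "lt (x j) (letter ?v)" using rel_letters[OF _ gv(1) _ gv(2), of "T j"] cj False by auto
        have "letter ?w \<noteq> letter ?v" using eq \<open>c = j\<close> False by simp
        then have "tw_less ?w ?v \<longleftrightarrow> lt (letter ?w) (letter ?v)"
          using rel_letters[OF gw(1) gv(1) gw(2) gv(2)] by blast
        then show False using a eq \<open>c = j\<close> by simp
      qed
    next
      case False
      then have j2: "2 \<le> j" "j = k-2" using j k4 by auto
      let ?v = "W (j-2) j"
      have "W (j-1-1) (j-1+1) \<in> tw_dom k \<and> good (W (j-1-1) (j-1+1))" using good_S1[of "j-1"] j2 j by auto
      moreover have "j-1-1 = j-2" "j-1+1 = j" using j2 by auto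
      ultimately have gv: "?v \<in> tw_dom k" "good ?v" by auto
      have c1: "T (j-1) \<in> tw_dom k \<and> good (T (j-1))" using chain_dom[of "j-1"] j2 j by simp
      have s: "lt (x (j-1)) (x j)" using chain_strict[of "j-1" j] j2 j by simp
      show False
      proof (cases "letter ?v = x j")
        case True
        have "x (j-1) \<noteq> x j" using chain_inj[of "j-1" j] j j2 by simp
        then have "letter ?v \<noteq> x (j-1)" using True by simp
        then have "tw_less (T (j-1)) ?v \<longleftrightarrow> lt (x (j-1)) (letter ?v)"
          using rel_letters[OF _ gv(1) _ gv(2), of "T (j-1)"] c1 by (metis (no_types))
        then show False using s True j2 by simp
      next
        case False
        have a: "lt (letter ?v) (x j)" using rel_letters[OF gv(1) _ gv(2), of "T j"] cj False by auto
        have "letter ?v \<noteq> letter ?w" using eq \<open>c = j\<close> False by simp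
        then have "tw_less ?v ?w \<longleftrightarrow> lt (letter ?v) (letter ?w)"
          using rel_letters[OF gv(1) gw(1) gv(2) gw(2)] by blast
        then show False using a eq \<open>c = j\<close> j2 by simp
      qed
    qed
  qed
qed

lemma pairB:
  assumes j: "1 \<le> j" "j+2 \<le> k-2" and c: "1 \<le> c" "c \<le> k-2"
  shows "letter (W (j-1) (j+2)) \<noteq> x c"
proof
  let ?w = "W (j-1) (j+2)"
  assume eq: "letter ?w = x c"
  have gw: "?w \<in> tw_dom k" "good ?w" using good_S2[OF j] by auto
  define d where "d = (if c = j then j+1 else j)"
  have d: "1 \<le> d" "d \<le> k-2" "d \<noteq> c" "j \<le> d" "d \<le> j+1" using j unfolding d_def by auto
  note cd = chain_dom[OF d(1,2)] and cc = chain_dom[OF c]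
  have ne: "letter ?w \<noteq> x d" using chain_inj[of c d] d c eq by auto
  have 1: "\<not> lt (x c) (x d)" using rel_letters[OF gw(1) _ gw(2), of "T d"] ne eq cd d j by auto
  have 2: "\<not> lt (x d) (x c)" using rel_letters[OF _ gw(1) _ gw(2), of "T d"] ne eq cd d j by auto
  show False
  proof (cases "c < d")
    case True then show False using chain_strict[of c d] 1 d c by simp
  next
    case False then have "d < c" using d by simp
    then show False using chain_strict[of d c] 2 d c by simp
  qed
qed

lemma claimC:
  assumes e: "W a b \<in> tw_dom k" "good (W a b)" "a \<le> k-2" "\<And>c. 1 \<le> c \<Longrightarrow> c \<le> k-2 \<Longrightarrow> letter (W a b) \<noteq> x c"
    and e': "W a' b' \<in> tw_dom k" "good (W a' b')" "a' \<le> k-2" "\<And>c. 1 \<le> c \<Longrightarrow> c \<le> k-2 \<Longrightarrow> letter (W a' b') \<noteq> x c"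
    and eq: "letter (W a b) = letter (W a' b')"
  shows "a = a' \<and> b = b'"
proof -
  have r1: "c \<le> a \<longleftrightarrow> c \<le> a'" if "1 \<le> c" "c \<le> k-2" for c
  proof -
    note cc = chain_dom[OF that]
    have "tw_less (T c) (W a b) \<longleftrightarrow> lt (x c) (letter (W a b))"
      using rel_letters[OF _ e(1) _ e(2), of "T c"] cc e(4)[OF that] by metis
    moreover have "tw_less (T c) (W a' b') \<longleftrightarrow> lt (x c) (letter (W a' b'))"
      using rel_letters[OF _ e'(1) _ e'(2), of "T c"] cc e'(4)[OF that] by metis
    ultimately show ?thesis using eq by simp
  qed
  have r2: "b \<le> c \<longleftrightarrow> b' \<le> c" if "1 \<le> c" "c \<le> k-2" for c
  proof -
    note cc = chain_dom[OF that]
    have "tw_less (W a b) (T c) \<longleftrightarrow> lt (letter (W a b)) (x c)"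
      using rel_letters[OF e(1) _ e(2), of "T c"] cc e(4)[OF that] by metis
    moreover have "tw_less (W a' b') (T c) \<longleftrightarrow> lt (letter (W a' b')) (x c)"
      using rel_letters[OF e'(1) _ e'(2), of "T c"] cc e'(4)[OF that] by metis
    ultimately show ?thesis using eq by simp
  qed
  have bb: "2 \<le> b" "b \<le> k-1" "2 \<le> b'" "b' \<le> k-1" using e(1) e'(1) unfolding tw_dom_def by auto
  have "a = a'"
  proof (rule ccontr)
    assume "a \<noteq> a'"
    then consider "a < a'" | "a' < a" by linarith
    then show False
    proof cases
      case 1 then show False using r1[of a'] e'(3) by simp
    next
      case 2 then show False using r1[of a] e(3) by simp
    qed
  qed
  moreover have "b = b'"
  proof (rule ccontr)
    assume "b \<noteq> b'"
    then consider "b < b'" | "b' < b" by linarith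
    then show False
    proof cases
      case 1
      then have "b \<le> k-2" using bb by linarith
      then show False using r2[of b] bb 1 by simp
    next
      case 2
      then have "b' \<le> k-2" using bb by linarith
      then show False using r2[of b'] bb 2 by simp
    qed
  qed
  ultimately show ?thesis by simp
qed

end


context qr_setup begin

definition S0 where "S0 = T ` {1..k-2}"
definition S1 where "S1 = (\<lambda>j. W (j-1) (j+1)) ` {1..k-2}"
definition S2 where "S2 = (\<lambda>j. W (j-1) (j+2)) ` {1..k-4}"

lemma cardS: "card (S0 \<union> S1 \<union> S2) = 3*k-8"
proof -
  have c0: "card S0 = k-2" unfolding S0_def by (subst card_image) (auto simp: inj_on_def)
  have c1: "card S1 = k-2" unfolding S1_def by (subst card_image) (auto simp: inj_on_def)
  have c2: "card S2 = k-4" unfolding S2_def by (subst card_image) (auto simp: inj_on_def)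
  have d1: "S0 \<inter> (S1 \<union> S2) = {}" unfolding S0_def S1_def S2_def by auto
  have d2: "S1 \<inter> S2 = {}" unfolding S1_def S2_def by auto
  have f: "finite S0" "finite S1" "finite S2" unfolding S0_def S1_def S2_def by auto
  have "card (S0 \<union> S1 \<union> S2) = card (S0 \<union> (S1 \<union> S2))" by (simp add: Un_assoc)
  also have "\<dots> = card S0 + card (S1 \<union> S2)" using d1 f by (simp add: card_Un_disjoint)
  also have "\<dots> = card S0 + card S1 + card S2" using d2 f by (simp add: card_Un_disjoint)
  finally show ?thesis using c0 c1 c2 k4 by simp
qed

lemma Wfacts:
  assumes "v \<in> S1 \<union> S2"
  shows "\<exists>a b. v = W a b \<and> W a b \<in> tw_dom k \<and> good (W a b) \<and> a \<le> k-2 \<and>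
           (\<forall>c. 1 \<le> c \<longrightarrow> c \<le> k-2 \<longrightarrow> letter v \<noteq> x c)"
  using assms
proof
  assume "v \<in> S1"
  then obtain j where j: "1 \<le> j" "j \<le> k-2" "v = W (j-1) (j+1)" unfolding S1_def by auto
  then show ?thesis using good_S1[OF j(1,2)] singleA[OF j(1,2)] by auto
next
  assume "v \<in> S2"
  then obtain j where j: "1 \<le> j" "j \<le> k-4" "v = W (j-1) (j+2)" unfolding S2_def by auto
  then have j': "j+2 \<le> k-2" using k4 by simp
  then show ?thesis using good_S2[OF j(1) j'] pairB[OF j(1) j'] j by auto
qed

lemma injS: "inj_on letter (S0 \<union> S1 \<union> S2)"
proof (rule inj_onI)
  fix u v assume u: "u \<in> S0 \<union> S1 \<union> S2" and v: "v \<in> S0 \<union> S1 \<union> S2" and eq: "letter u = letter v"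
  show "u = v"
  proof (cases "u \<in> S0")
    case uT: True
    then obtain a where a: "1 \<le> a" "a \<le> k-2" "u = T a" unfolding S0_def by auto
    show ?thesis
    proof (cases "v \<in> S0")
      case True
      then obtain b where b: "1 \<le> b" "b \<le> k-2" "v = T b" unfolding S0_def by auto
      then show ?thesis using a eq chain_inj[of a b] by auto
    next
      case False
      then have "v \<in> S1 \<union> S2" using v by auto
      then show ?thesis using Wfacts[of v] a eq by auto
    qed
  next
    case uF: False
    then have u': "u \<in> S1 \<union> S2" using u by auto
    show ?thesis
    proof (cases "v \<in> S0")
      case True
      then obtain b where b: "1 \<le> b" "b \<le> k-2" "v = T b" unfolding S0_def by auto
      then show ?thesis using Wfacts[OF u'] eq by auto
    next
      case False
      then have v': "v \<in> S1 \<union> S2" using v by auto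
      obtain a b where A: "u = W a b" "W a b \<in> tw_dom k" "good (W a b)" "a \<le> k-2"
        "\<And>c. 1 \<le> c \<Longrightarrow> c \<le> k-2 \<Longrightarrow> letter u \<noteq> x c" using Wfacts[OF u'] by blast
      obtain a' b' where B: "v = W a' b'" "W a' b' \<in> tw_dom k" "good (W a' b')" "a' \<le> k-2"
        "\<And>c. 1 \<le> c \<Longrightarrow> c \<le> k-2 \<Longrightarrow> letter v \<noteq> x c" using Wfacts[OF v'] by blast
      have "a = a' \<and> b = b'"
        by (rule claimC) (use A B eq in auto)
      then show ?thesis using A B by simp
    qed
  qed
qed

lemma S_sub: "letter ` (S0 \<union> S1 \<union> S2) \<subseteq> fst (Os q)"
proof
  fix z assume "z \<in> letter ` (S0 \<union> S1 \<union> S2)"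
  then obtain u where u: "u \<in> S0 \<union> S1 \<union> S2" "z = letter u" by auto
  show "z \<in> fst (Os q)"
  proof (cases "u \<in> S0")
    case True
    then obtain a where a: "1 \<le> a" "a \<le> k-2" "u = T a" unfolding S0_def by auto
    then show ?thesis using chain_dom[OF a(1,2)] u by simp
  next
    case False
    then have "u \<in> S1 \<union> S2" using u by auto
    then show ?thesis using Wfacts[of u] good_letter_dom u by auto
  qed
qed

lemma width_bound: "enat (3*k-8) \<le> card_e (fst (Os q))"
proof (cases "finite (fst (Os q))")
  case True
  have "card (letter ` (S0 \<union> S1 \<union> S2)) = 3*k-8" using card_image[OF injS] cardS by simp
  moreover have "card (letter ` (S0 \<union> S1 \<union> S2)) \<le> card (fst (Os q))" using card_mono[OF True S_sub] .
  ultimately show ?thesis using True unfolding card_e_def by simp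
next
  case False then show ?thesis unfolding card_e_def by simp
qed

end

theorem lemma7p3:
  fixes k :: nat and i :: "'i::wellorder" and Os :: "'i \<Rightarrow> 'a ord"
    and f :: "tw_elem \<Rightarrow> 'i \<times> ('i \<Rightarrow> 'a)"
  assumes "k \<ge> 4"
    and "questionable_rep (TW k) i Os f"
  shows "qwidth Os \<ge> enat (3 * k - 8)"
proof -
  interpret qr_setup k i Os f using assms by unfold_locales
  have 1: "enat (3*k-8) \<le> card_e (fst (Os q))" by (rule width_bound)
  have 2: "card_e (fst (Os q)) \<le> qwidth Os" unfolding qwidth_def by (rule SUP_upper) simp
  show ?thesis using 1 2 by (rule order_trans)
qed


end
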